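(* Let $H$ be a finite-dimensional Hilbert space, let $C_1\subseteq H$ be a nonempty compact set and $C_2\subseteq H$ a nonempty closed set. For $i=1,2$, let $P_{C_i}:H\to C_i$ be a map such that $P_{C_i}(z)$ is a nearest point of $C_i$ to $z$ for every $z\in H$, and assume that $P_{C_2}$ is continuous. Let $x_0\in C_1$ and define sequences by $y_i=P_{C_2}(x_i)$ and $x_{i+1}=P_{C_1}(y_i)$ for $i=0,1,2,\ldots$. Then there exist $x\in C_1$ and $y=P_{C_2}(x)\in C_2$ such that $\|x-y\|=\lim_{i\to\infty}\|x_i-y_i\|$. *)

theory Defs
  imports "HOL-Analysis.Analysis"
begin

end

theory Submission
  imports Defs
begin

theorem mainTheorem6:
  fixes C1 C2 :: "'a::euclidean_space set"
    and P1 P2 :: "'a \<Rightarrow> 'a"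
    and xs ys :: "nat \<Rightarrow> 'a"
    and x0 :: 'a
  assumes "compact C1" and "C1 \<noteq> {}"
    and "closed C2" and "C2 \<noteq> {}"
    and "\<And>z. P1 z \<in> C1 \<and> (\<forall>c\<in>C1. dist z (P1 z) \<le> dist z c)"
    and "\<And>z. P2 z \<in> C2 \<and> (\<forall>c\<in>C2. dist z (P2 z) \<le> dist z c)"
    and "continuous_on UNIV P2"
    and "x0 \<in> C1"
    and "xs 0 = x0"
    and "\<And>i. ys i = P2 (xs i)"
    and "\<And>i. xs (Suc i) = P1 (ys i)"
  shows "\<exists>x\<in>C1. \<exists>y. y = P2 x \<and> y \<in> C2 \<and>
           (\<lambda>i. norm (xs i - ys i)) \<longlonglongrightarrow> norm (x - y)"
proof -
  have inC1: "xs i \<in> C1" for i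
    using assms(5,8,9,11) by (cases i) auto
  have inC2: "ys i \<in> C2" for i using assms(6,10) by auto
  define d where "d i = norm (xs i - ys i)" for i
  have step: "d (Suc i) \<le> d i" for i
  proof -
    have "dist (xs (Suc i)) (ys (Suc i)) \<le> dist (xs (Suc i)) (ys i)"
      using assms(6)[of "xs (Suc i)"] assms(10)[of "Suc i"] inC2[of i] by auto
    also have "\<dots> = dist (ys i) (P1 (ys i))" using assms(11) by (simp add: dist_commute)
    also have "\<dots> \<le> dist (ys i) (xs i)" using assms(5)[of "ys i"] inC1[of i] by auto
    finally show ?thesis unfolding d_def by (simp add: dist_norm norm_minus_commute)
  qed
  have dec: "antimono_on UNIV d"
    using antimono_iff_le_Suc[of d] step by simp
  obtain L where L: "d \<longlonglongrightarrow> L"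
    using decseq_convergent[OF dec, of 0] unfolding d_def by auto
  obtain x r where x: "x \<in> C1" and r: "strict_mono r" and xr: "(xs \<circ> r) \<longlonglongrightarrow> x"
    using seq_compactE[OF compact_imp_seq_compact[OF assms(1)], of xs] inC1 by blast
  have "isCont P2 x" using assms(7) continuous_on_eq_continuous_at by blast
  hence "(\<lambda>n. P2 ((xs \<circ> r) n)) \<longlonglongrightarrow> P2 x" using xr isCont_tendsto_compose by blast
  hence "(\<lambda>n. norm ((xs \<circ> r) n - P2 ((xs \<circ> r) n))) \<longlonglongrightarrow> norm (x - P2 x)"
    using xr by (intro tendsto_norm tendsto_diff) (auto simp: o_def)
  hence "(d \<circ> r) \<longlonglongrightarrow> norm (x - P2 x)" unfolding d_def o_def using assms(10) by simp
  moreover have "(d \<circ> r) \<longlonglongrightarrow> L" using L r by (rule LIMSEQ_subseq_LIMSEQ)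
  ultimately have "L = norm (x - P2 x)" using LIMSEQ_unique by blast
  thus ?thesis using x L assms(6) unfolding d_def by auto
qed

end
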